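(* Let $d\ge1$ and let $(S_t)_{t\in\mathbb{R}}$ be a one-parameter group of real orthogonal linear operators on $\mathbb{R}^d\otimes\mathbb{R}^d$, with associated maps $\mathcal{S}_t(X)=S_tXS_t^{\top}$ on real $d^2\times d^2$ matrices. Suppose $\mathcal{S}_t(\rho\otimes\rho)=\rho\otimes\rho$ for every $t\in\mathbb{R}$ and every real $d\times d$ density matrix $\rho$ (real symmetric, positive semidefinite, trace one). Then $\mathcal{S}_t$ is the identity map for every $t\in\mathbb{R}$.
   Context: This concerns real quantum theory, in which states of a $d$-level system are real density matrices on $\mathbb{R}^d$ and reversible transformations are conjugations by orthogonal matrices. *)

theory Defs
  imports "HOL-Analysis.Analysis"
begin

text \<open>Real d x d matrices are indexed by a finite type 'n (d = CARD('n)).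
  The tensor product space R^d (x) R^d is indexed by 'n \<times> 'n.\<close>

definition real_density_matrix :: "real^'n^'n \<Rightarrow> bool" where
  "real_density_matrix \<rho> \<longleftrightarrow>
     transpose \<rho> = \<rho> \<and>
     (\<forall>x::real^'n. 0 \<le> x \<bullet> (\<rho> *v x)) \<and>
     trace \<rho> = 1"

definition kron :: "real^'n^'m \<Rightarrow> real^'q^'p \<Rightarrow> real^('n \<times> 'q)^('m \<times> 'p)" where
  "kron A B = (\<chi> r c. A $ fst r $ fst c * B $ snd r $ snd c)"

definition orth_one_param_group :: "(real \<Rightarrow> real^'m^'m) \<Rightarrow> bool" where
  "orth_one_param_group S \<longleftrightarrow>
     S 0 = mat 1 \<and>
     (\<forall>s t. S (s + t) = S s ** S t) \<and>
     (\<forall>t. orthogonal_matrix (S t)) \<and>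
     continuous_on UNIV S"

end

theory Submission
  imports Defs
begin
lemma orth_inner:
  fixes R :: "real^'m^'m"
  assumes "orthogonal_matrix R"
  shows "(R *v x) \<bullet> (R *v y) = x \<bullet> y"
proof -
  have "orthogonal_transformation (\<lambda>x. R *v x)"
    using assms by (simp add: orthogonal_transformation_matrix)
  then show ?thesis unfolding orthogonal_transformation_def by blast
qed

lemma comm_of_conj:
  fixes R K :: "real^'m^'m"
  assumes "orthogonal_matrix R" "R ** K ** transpose R = K"
  shows "R *v (K *v x) = K *v (R *v x)"
proof -
  have "R ** K = R ** K ** (transpose R ** R)"
    using assms(1) by (simp add: orthogonal_matrix_def)
  also have "\<dots> = (R ** K ** transpose R) ** R" by (simp add: matrix_mul_assoc)
  also have "\<dots> = K ** R" using assms(2) by simp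
  finally show ?thesis by (simp add: matrix_vector_mul_assoc)
qed

definition rk1 :: "real^'n \<Rightarrow> real^'n^'n" where
  "rk1 v = (\<chi> a b. v$a * v$b / (v \<bullet> v))"

lemma rk1_density:
  fixes v :: "real^'n"
  assumes "v \<noteq> 0"
  shows "real_density_matrix (rk1 v)"
proof -
  have vv: "v \<bullet> v > 0" using assms by simp
  have "transpose (rk1 v) = rk1 v"
    by (simp add: rk1_def transpose_def vec_eq_iff mult.commute)
  moreover have "0 \<le> x \<bullet> (rk1 v *v x)" for x
  proof -
    have "x \<bullet> (rk1 v *v x) = (\<Sum>a\<in>UNIV. x$a * (\<Sum>b\<in>UNIV. v$a * v$b / (v \<bullet> v) * x$b))"
      by (simp add: inner_vec_def matrix_vector_mult_def rk1_def)
    also have "\<dots> = (\<Sum>a\<in>UNIV. x$a * v$a) * (\<Sum>b\<in>UNIV. v$b * x$b) / (v \<bullet> v)"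
      by (simp add: sum_distrib_left sum_distrib_right sum_divide_distrib mult_ac)
    also have "\<dots> = (v \<bullet> x)^2 / (v \<bullet> v)"
      by (simp add: inner_vec_def power2_eq_square mult.commute)
    finally show ?thesis using vv by simp
  qed
  moreover have "trace (rk1 v) = 1"
  proof -
    have "trace (rk1 v) = (\<Sum>a\<in>UNIV. v$a * v$a) / (v \<bullet> v)"
      by (simp add: trace_def rk1_def sum_divide_distrib)
    also have "\<dots> = 1" using vv by (simp add: inner_vec_def)
    finally show ?thesis .
  qed
  ultimately show ?thesis unfolding real_density_matrix_def by blast
qed

definition tp :: "real^'n \<Rightarrow> real^('n\<times>'n)" where
  "tp v = (\<chi> k. v$fst k * v$snd k)"

lemma kron_rk1: "kron (rk1 v) (rk1 v) = (\<chi> r c. tp v $ r * tp v $ c / (v \<bullet> v)^2)"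
  by (simp add: kron_def rk1_def tp_def vec_eq_iff power2_eq_square mult_ac)

lemma rank_one_eig:
  fixes R :: "real^('n::finite\<times>'n)^('n\<times>'n)" and v :: "real^'n"
  assumes orth: "orthogonal_matrix R"
    and h: "\<And>\<rho>::real^'n^'n. real_density_matrix \<rho> \<Longrightarrow> R ** kron \<rho> \<rho> ** transpose R = kron \<rho> \<rho>"
    and v: "v \<noteq> 0"
  shows "(tp v \<bullet> tp v) *\<^sub>R (R *v tp v) = (tp v \<bullet> (R *v tp v)) *\<^sub>R tp v"
proof -
  let ?K = "kron (rk1 v) (rk1 v)"
  let ?w = "tp v"
  have vv: "v \<bullet> v \<noteq> 0" using v by simp
  have Kx: "?K *v y = ((?w \<bullet> y) / (v \<bullet> v)^2) *\<^sub>R ?w" for y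
    by (simp add: kron_rk1 matrix_vector_mult_def vec_eq_iff inner_vec_def sum_distrib_left
        sum_divide_distrib mult_ac)
  have "R *v (?K *v ?w) = ?K *v (R *v ?w)"
    by (rule comm_of_conj[OF orth h[OF rk1_density[OF v]]])
  then have "((?w \<bullet> ?w) / (v \<bullet> v)^2) *\<^sub>R (R *v ?w) = ((?w \<bullet> (R *v ?w)) / (v \<bullet> v)^2) *\<^sub>R ?w"
    by (simp add: Kx matrix_vector_mult_scaleR)
  then have "(v \<bullet> v)^2 *\<^sub>R (((?w \<bullet> ?w) / (v \<bullet> v)^2) *\<^sub>R (R *v ?w)) = (v \<bullet> v)^2 *\<^sub>R (((?w \<bullet> (R *v ?w)) / (v \<bullet> v)^2) *\<^sub>R ?w)"
    by simp
  then show ?thesis using vv by simp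
qed


lemma sum_delta_mult:
  fixes f :: "'a::finite \<Rightarrow> real"
  shows "(\<Sum>c\<in>UNIV. (if r = c then X else 0) * f c) = X * f r"
proof -
  have "(\<Sum>c\<in>UNIV. (if r = c then X else 0) * f c) = (\<Sum>c\<in>UNIV. if r = c then X * f c else 0)"
    by (intro sum.cong) auto
  then show ?thesis by simp
qed

definition lamd :: "'n \<Rightarrow> 'n \<Rightarrow> 'n \<Rightarrow> real" where
  "lamd i j a = (if a = i then 1/3 else if a = j then 2/3 else 0)"

definition dg :: "'n \<Rightarrow> 'n \<Rightarrow> real^'n^'n" where
  "dg i j = (\<chi> a b. if a = b then lamd i j a else 0)"

lemma dg_density:
  fixes i j :: "'n::finite"
  assumes "i \<noteq> j"
  shows "real_density_matrix (dg i j)"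
proof -
  have "transpose (dg i j) = dg i j"
    by (simp add: dg_def transpose_def vec_eq_iff)
  moreover have "0 \<le> x \<bullet> (dg i j *v x)" for x
  proof -
    have "(dg i j *v x) $ a = lamd i j a * x$a" for a
      using sum_delta_mult[of a "lamd i j a" "\<lambda>b. x$b"]
      by (simp add: matrix_vector_mult_def dg_def)
    then have "x \<bullet> (dg i j *v x) = (\<Sum>a\<in>UNIV. lamd i j a * (x$a * x$a))"
      by (simp add: inner_vec_def mult_ac)
    also have "\<dots> \<ge> 0"
      by (intro sum_nonneg, rule mult_nonneg_nonneg) (auto simp: lamd_def)
    finally show ?thesis .
  qed
  moreover have "trace (dg i j) = 1"
  proof -
    have "trace (dg i j) = (\<Sum>a\<in>UNIV. (if a = i then 1/3 else 0) + (if a = j then 2/3 else 0))"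
      unfolding trace_def using assms by (intro sum.cong) (auto simp: dg_def lamd_def)
    also have "\<dots> = 1" by (simp add: sum.distrib)
    finally show ?thesis .
  qed
  ultimately show ?thesis unfolding real_density_matrix_def by blast
qed

lemma kron_dg_mv:
  fixes i j :: "'n::finite"
  shows "kron (dg i j) (dg i j) *v y = (\<chi> k. lamd i j (fst k) * lamd i j (snd k) * y $ k)"
proof -
  have e: "kron (dg i j) (dg i j) $ r $ c = (if r = c then lamd i j (fst r) * lamd i j (snd r) else 0)" for r c :: "'n \<times> 'n"
    by (cases r; cases c) (auto simp: kron_def dg_def)
  show ?thesis
    unfolding vec_eq_iff
  proof
    fix r :: "'n \<times> 'n"
    show "(kron (dg i j) (dg i j) *v y) $ r = (\<chi> k. lamd i j (fst k) * lamd i j (snd k) * y $ k) $ r"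
      using sum_delta_mult[of r "lamd i j (fst r) * lamd i j (snd r)" "\<lambda>c. y$c"]
      by (simp add: matrix_vector_mult_def e)
  qed
qed

lemma support:
  fixes R :: "real^('n::finite\<times>'n)^('n\<times>'n)" and i j :: 'n
  assumes orth: "orthogonal_matrix R"
    and h: "\<And>\<rho>::real^'n^'n. real_density_matrix \<rho> \<Longrightarrow> R ** kron \<rho> \<rho> ** transpose R = kron \<rho> \<rho>"
    and ij: "i \<noteq> j" and k: "k \<noteq> (i,j)" "k \<noteq> (j,i)"
  shows "(R *v axis (i,j) 1) $ k = 0"
proof -
  let ?K = "kron (dg i j) (dg i j)"
  have "R *v (?K *v axis (i,j) 1) = ?K *v (R *v axis (i,j) 1)"
    by (rule comm_of_conj[OF orth h[OF dg_density[OF ij]]])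
  moreover have "?K *v axis (i,j) 1 = (2/9) *\<^sub>R axis (i,j) 1"
    using ij by (auto simp: kron_dg_mv vec_eq_iff axis_def lamd_def)
  ultimately have "(2/9) *\<^sub>R (R *v axis (i,j) 1) = ?K *v (R *v axis (i,j) 1)"
    by (simp add: matrix_vector_mult_scaleR)
  then have "((2/9) *\<^sub>R (R *v axis (i,j) 1)) $ k = (?K *v (R *v axis (i,j) 1)) $ k"
    by simp
  then have "(2/9) * (R *v axis (i,j) 1) $ k = lamd i j (fst k) * lamd i j (snd k) * (R *v axis (i,j) 1) $ k"
    unfolding kron_dg_mv by simp
  then have "(2/9 - lamd i j (fst k) * lamd i j (snd k)) * (R *v axis (i,j) 1) $ k = 0"
    by (simp add: algebra_simps)
  moreover have "lamd i j (fst k) * lamd i j (snd k) \<noteq> 2/9"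
    using k ij by (cases k) (auto simp: lamd_def)
  ultimately show ?thesis by simp
qed

lemma scal:
  fixes c al be al' be' :: real
  assumes "c^2 = 1" "al + al' = c" "be + be' = c" "al^2+be^2 = 1" "al'^2+be'^2=1"
  shows "al^2 + be*al' = 1 \<and> al*be + be*be' = 0"
proof -
  have a': "al' = c - al" and b': "be' = c - be" using assms by auto
  have "(c-al)^2 + (c-be)^2 = 1" using assms(5) a' b' by simp
  then have "2*c^2 - 2*c*(al+be) + (al^2+be^2) = 1" by (simp add: power2_eq_square algebra_simps)
  then have "c*(al+be) = 1" using assms(1,4) by simp
  then have s: "al + be = c" using assms(1) by (metis mult.assoc mult_1 power2_eq_square)
  then have "(al+be)^2 = 1" using assms(1) by simp
  then have "al^2+be^2 + 2*(al*be) = 1" by (simp add: power2_eq_square algebra_simps)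
  then have p: "al*be = 0" using assms(4) by simp
  have "al' = be" "be' = al" using s assms(2,3) by linarith+
  then show ?thesis using p assms(4) by (simp add: power2_eq_square algebra_simps)
qed

lemma inner_ax: "axis k (1::real) \<bullet> axis l 1 = (if k = l then 1 else 0)"
  by (simp add: inner_axis_axis)

lemma diag_eig:
  fixes R :: "real^('n::finite\<times>'n)^('n\<times>'n)" and i :: 'n
  assumes orth: "orthogonal_matrix R"
    and h: "\<And>\<rho>::real^'n^'n. real_density_matrix \<rho> \<Longrightarrow> R ** kron \<rho> \<rho> ** transpose R = kron \<rho> \<rho>"
  shows "\<exists>a. R *v axis (i,i) 1 = a *\<^sub>R axis (i,i) 1 \<and> a^2 = 1"
proof -
  have t: "tp (axis i (1::real)) = axis (i,i) 1"
    by (auto simp: tp_def vec_eq_iff axis_def)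
  have "axis i (1::real) \<noteq> 0" by simp
  from rank_one_eig[OF orth h this] t
  have e: "R *v axis (i,i) 1 = (axis (i,i) 1 \<bullet> (R *v axis (i,i) 1)) *\<^sub>R axis (i,i) 1"
    by (simp add: inner_ax)
  define a where "a = axis (i,i) 1 \<bullet> (R *v axis (i,i) 1)"
  have "(R *v axis (i,i) 1) \<bullet> (R *v axis (i,i) 1) = 1"
    by (simp add: orth_inner[OF orth] inner_ax)
  then have "a^2 = 1" using e unfolding a_def[symmetric]
    by (simp add: inner_ax power2_eq_square)
  then show ?thesis using e a_def by blast
qed

lemma offdiag:
  fixes R :: "real^('n::finite\<times>'n)^('n\<times>'n)" and i j :: 'n
  assumes orth: "orthogonal_matrix R"
    and h: "\<And>\<rho>::real^'n^'n. real_density_matrix \<rho> \<Longrightarrow> R ** kron \<rho> \<rho> ** transpose R = kron \<rho> \<rho>"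
    and ij: "i \<noteq> j"
  shows "R *v (R *v axis (i,j) 1) = axis (i,j) 1"
proof -
  let ?E = "\<lambda>k. axis k (1::real)"
  obtain a where a: "R *v ?E (i,i) = a *\<^sub>R ?E (i,i)" "a^2 = 1" using diag_eig[OF orth h] by blast
  obtain b where b: "R *v ?E (j,j) = b *\<^sub>R ?E (j,j)" "b^2 = 1" using diag_eig[OF orth h] by blast
  define v where "v = axis i (1::real) + axis j 1"
  define w where "w = ?E (i,i) + ?E (i,j) + ?E (j,i) + ?E (j,j)"
  have tv: "tp v = w"
    using ij by (auto simp: tp_def vec_eq_iff axis_def v_def w_def)
  have v0: "v \<noteq> 0" using ij by (auto simp: v_def vec_eq_iff axis_def)
  have ww: "w \<bullet> w = 4"
    using ij by (simp add: w_def inner_add_left inner_add_right inner_ax)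
  from rank_one_eig[OF orth h v0] tv ww
  have "4 *\<^sub>R (R *v w) = (w \<bullet> (R *v w)) *\<^sub>R w" by simp
  then have "(1/4) *\<^sub>R (4 *\<^sub>R (R *v w)) = (1/4) *\<^sub>R ((w \<bullet> (R *v w)) *\<^sub>R w)" by simp
  then have "R *v w = ((w \<bullet> (R *v w))/4) *\<^sub>R w" by simp
  then obtain c where c: "R *v w = c *\<^sub>R w" by blast
  have "(R *v ?E (i,i)) \<bullet> (R *v w) = ?E (i,i) \<bullet> w" by (rule orth_inner[OF orth])
  then have "a * c = 1" using ij unfolding c a(1)
    by (simp add: w_def inner_add_left inner_add_right inner_ax mult.commute)
  then have ac: "a = c" using a(2) by (metis mult.assoc mult_1 power2_eq_square)
  have "(R *v ?E (j,j)) \<bullet> (R *v w) = ?E (j,j) \<bullet> w" by (rule orth_inner[OF orth])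
  then have "b * c = 1" using ij unfolding c b(1)
    by (simp add: w_def inner_add_left inner_add_right inner_ax mult.commute)
  then have bc: "b = c" using b(2) by (metis mult.assoc mult_1 power2_eq_square)
  have c2: "c^2 = 1" using a(2) ac by simp
  have "R *v w = R *v ?E (i,i) + R *v ?E (i,j) + R *v ?E (j,i) + R *v ?E (j,j)"
    by (simp add: w_def matrix_vector_right_distrib)
  then have sum: "R *v ?E (i,j) + R *v ?E (j,i) = c *\<^sub>R ?E (i,j) + c *\<^sub>R ?E (j,i)"
    using a(1) b(1) c ac bc by (simp add: w_def scaleR_right_distrib algebra_simps)
  define al where "al = (R *v ?E (i,j)) $ (i,j)"
  define be where "be = (R *v ?E (i,j)) $ (j,i)"
  define al' where "al' = (R *v ?E (j,i)) $ (i,j)"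
  define be' where "be' = (R *v ?E (j,i)) $ (j,i)"
  have r1: "R *v ?E (i,j) = al *\<^sub>R ?E (i,j) + be *\<^sub>R ?E (j,i)"
    unfolding vec_eq_iff
  proof
    fix k show "(R *v ?E (i,j)) $ k = (al *\<^sub>R ?E (i,j) + be *\<^sub>R ?E (j,i)) $ k"
      using ij support[OF orth h ij, of k] by (auto simp: al_def be_def axis_def)
  qed
  have r2: "R *v ?E (j,i) = al' *\<^sub>R ?E (i,j) + be' *\<^sub>R ?E (j,i)"
    unfolding vec_eq_iff
  proof
    fix k show "(R *v ?E (j,i)) $ k = (al' *\<^sub>R ?E (i,j) + be' *\<^sub>R ?E (j,i)) $ k"
      using ij support[OF orth h ij[symmetric], of k] by (auto simp: al'_def be'_def axis_def)
  qed
  have s1: "al + al' = c" using arg_cong[OF sum, of "\<lambda>x. x $ (i,j)"] ij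
    by (simp add: al_def al'_def axis_def)
  have s2: "be + be' = c" using arg_cong[OF sum, of "\<lambda>x. x $ (j,i)"] ij
    by (simp add: be_def be'_def axis_def)
  have "(R *v ?E (i,j)) \<bullet> (R *v ?E (i,j)) = 1" by (simp add: orth_inner[OF orth] inner_ax)
  then have n1: "al^2 + be^2 = 1" using ij
    by (simp add: r1 inner_add_left inner_add_right inner_ax power2_eq_square)
  have "(R *v ?E (j,i)) \<bullet> (R *v ?E (j,i)) = 1" by (simp add: orth_inner[OF orth] inner_ax)
  then have n2: "al'^2 + be'^2 = 1" using ij
    by (simp add: r2 inner_add_left inner_add_right inner_ax power2_eq_square)
  from scal[OF c2 s1 s2 n1 n2]
  have q: "al^2 + be*al' = 1" "al*be + be*be' = 0" by auto
  have "R *v (R *v ?E (i,j)) = al *\<^sub>R (R *v ?E (i,j)) + be *\<^sub>R (R *v ?E (j,i))"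
    by (simp add: r1 matrix_vector_right_distrib matrix_vector_mult_scaleR)
  also have "\<dots> = (al^2 + be*al') *\<^sub>R ?E (i,j) + (al*be + be*be') *\<^sub>R ?E (j,i)"
    by (simp add: r1 r2 scaleR_right_distrib scaleR_add_left power2_eq_square algebra_simps)
  also have "\<dots> = ?E (i,j)" using q by simp
  finally show ?thesis .
qed

lemma allbasis:
  fixes R :: "real^('n::finite\<times>'n)^('n\<times>'n)"
  assumes orth: "orthogonal_matrix R"
    and h: "\<And>\<rho>::real^'n^'n. real_density_matrix \<rho> \<Longrightarrow> R ** kron \<rho> \<rho> ** transpose R = kron \<rho> \<rho>"
  shows "R *v (R *v axis k 1) = axis k 1"
proof (cases k)
  case (Pair i j)
  show ?thesis
  proof (cases "i = j")
    case True
    obtain a where a: "R *v axis (i,i) 1 = a *\<^sub>R axis (i,i) 1" "a^2 = 1" using diag_eig[OF orth h] by blast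
    then show ?thesis using Pair True by (simp add: matrix_vector_mult_scaleR power2_eq_square)
  next
    case False
    then show ?thesis using Pair offdiag[OF orth h False] by simp
  qed
qed

theorem mainTheorem7:
  fixes S :: "real \<Rightarrow> real^('n::finite \<times> 'n)^('n \<times> 'n)"
  assumes "orth_one_param_group S"
    and "\<And>t (\<rho>::real^'n^'n). real_density_matrix \<rho> \<Longrightarrow>
            S t ** kron \<rho> \<rho> ** transpose (S t) = kron \<rho> \<rho>"
  shows "\<forall>t. \<forall>X :: real^('n \<times> 'n)^('n \<times> 'n). S t ** X ** transpose (S t) = X"
proof (intro allI)
  fix t and X :: "real^('n \<times> 'n)^('n \<times> 'n)"
  let ?R = "S (t/2)"
  have orth: "orthogonal_matrix ?R" using assms(1) unfolding orth_one_param_group_def by blast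
  have St: "S t = ?R ** ?R"
    using assms(1) unfolding orth_one_param_group_def by (metis field_sum_of_halves)
  have col: "S t *v axis k 1 = axis k 1" for k
    using allbasis[OF orth assms(2)] by (simp add: St matrix_vector_mul_assoc)
  have I: "S t = mat 1"
  proof -
    have "S t $ a $ b = mat 1 $ a $ b" for a b
    proof -
      have "S t $ a $ b = (S t *v axis b 1) $ a"
        by (simp add: matrix_vector_mult_basis column_def)
      also have "\<dots> = axis b 1 $ a" by (simp only: col)
      finally show ?thesis by (simp add: axis_def mat_def)
    qed
    then show ?thesis by (simp add: vec_eq_iff)
  qed
  show "S t ** X ** transpose (S t) = X" by (simp add: I)
qed

end
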